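(* Let $\mathcal{A}$ be a parity game arena and $\mathcal{A}_\bot$ its escape arena. For $i\in\{0,1\}$ and every vertex $s\in V$, player $i$ wins $s$ in the parity game on $\mathcal{A}$ if and only if player $i$ wins $s$ in $\mathcal{A}_\bot$.
   Context: Parity game arena: $\mathcal{A}=(V,E,o,c)$ with $V$ finite, $E\subseteq V\times V$, every vertex has a successor, owner map $o:V\to\{0,1\}$, colouring $c:V\to\{0,\dots,d-1\}$; $V_i=o^{-1}(i)$. A (memoryless) strategy of player $i$ is a set $\sigma$ of edges leaving $V_i$ with at least one edge out of each vertex of $V_i$ that has a successor; $\mathcal{A}|_\sigma$ keeps all edges of the other player and only the edges in $\sigma$ for player $i$. In the parity game on $\mathcal{A}$ plays are infinite paths, an infinite play is won by player $0$ iff the largest colour occurring infinitely often is even, and player $i$ wins $s$ if he has a strategy $\sigma$ such that he wins every play from $s$ in $\mathcal{A}|_\sigma$. Escape arena $\mathcal{A}_\bot$: vertices $V\cup\{\bot\}$, edges $E\cup(V_0\times\{\bot\})$, $\bot$ owned by player $0$ with no outgoing edges; plays are maximal paths (infinite or ending in $\bot$). Colour profiles $\mathcal{P}=\mathbb{Z}^d\cup\{-\infty,\infty\}$: a finite play $\pi$ ending in $\bot$ has value $\wp(\pi)\in\mathbb{Z}^d$ whose $k$-th coordinate counts the vertices of $V$ on $\pi$ with colour $k$; an infinite play has value $\infty$ if won by player $0$ under the parity condition and $-\infty$ otherwise. Total order $\prec$: $-\infty$ least, $\infty$ greatest; for distinct $p,p'\in\mathbb{Z}^d$ with $k$ the largest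 index where they differ, $p\prec p'$ iff ($k$ even and $p_k<p'_k$) or ($k$ odd and $p_k>p'_k$). Let $\overline{\wp}$ be the $\prec$-maximal value of an acyclic path in $\mathcal{A}_\bot$ ending in $\bot$ (taken to be $-\infty$ if there is none). In $\mathcal{A}_\bot$, player $0$ wins a play $\pi$ iff $\wp(\pi)\succ\overline{\wp}$, otherwise player $1$ wins it; player $i$ wins a vertex $s$ in $\mathcal{A}_\bot$ if he has a strategy $\sigma$ in $\mathcal{A}_\bot$ such that he wins every play from $s$ in $\mathcal{A}_\bot|_\sigma$. *)

theory Defs
  imports Main
begin

definition strategy :: "('a \<times> 'a) set \<Rightarrow> ('a \<Rightarrow> nat) \<Rightarrow> nat \<Rightarrow> ('a \<times> 'a) set \<Rightarrow> bool" where
  "strategy E own i \<sigma> \<longleftrightarrow>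
     \<sigma> \<subseteq> E \<and> (\<forall>(u, w) \<in> \<sigma>. own u = i) \<and>
     (\<forall>u. own u = i \<and> (\<exists>w. (u, w) \<in> E) \<longrightarrow> (\<exists>w. (u, w) \<in> \<sigma>))"

definition restr :: "('a \<times> 'a) set \<Rightarrow> ('a \<Rightarrow> nat) \<Rightarrow> nat \<Rightarrow> ('a \<times> 'a) set \<Rightarrow> ('a \<times> 'a) set" where
  "restr E own i \<sigma> = {(u, w) \<in> E. own u \<noteq> i} \<union> \<sigma>"

definition inf_path :: "('a \<times> 'a) set \<Rightarrow> 'a \<Rightarrow> (nat \<Rightarrow> 'a) \<Rightarrow> bool" where
  "inf_path E s p \<longleftrightarrow> p 0 = s \<and> (\<forall>n. (p n, p (Suc n)) \<in> E)"

definition fin_path :: "('a \<times> 'a) set \<Rightarrow> 'a list \<Rightarrow> bool" where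
  "fin_path E xs \<longleftrightarrow> xs \<noteq> [] \<and> (\<forall>j. Suc j < length xs \<longrightarrow> (xs ! j, xs ! Suc j) \<in> E)"

definition fin_max_path :: "('a \<times> 'a) set \<Rightarrow> 'a \<Rightarrow> 'a list \<Rightarrow> bool" where
  "fin_max_path E s xs \<longleftrightarrow> fin_path E xs \<and> hd xs = s \<and> \<not> (\<exists>w. (last xs, w) \<in> E)"

definition parity_arena :: "'v set \<Rightarrow> ('v \<times> 'v) set \<Rightarrow> ('v \<Rightarrow> nat) \<Rightarrow> ('v \<Rightarrow> nat) \<Rightarrow> nat \<Rightarrow> bool" where
  "parity_arena V E own col d \<longleftrightarrow>
     finite V \<and> E \<subseteq> V \<times> V \<and> (\<forall>v \<in> V. \<exists>w. (v, w) \<in> E) \<and>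
     (\<forall>v \<in> V. own v \<in> {0, 1}) \<and> (\<forall>v \<in> V. col v < d)"

definition parity_win0 :: "('v \<Rightarrow> nat) \<Rightarrow> (nat \<Rightarrow> 'v) \<Rightarrow> bool" where
  "parity_win0 col p \<longleftrightarrow> even (Max {k. \<exists>\<^sub>\<infinity>n. col (p n) = k})"

definition wins_parity :: "('v \<times> 'v) set \<Rightarrow> ('v \<Rightarrow> nat) \<Rightarrow> ('v \<Rightarrow> nat) \<Rightarrow> nat \<Rightarrow> 'v \<Rightarrow> bool" where
  "wins_parity E own col i s \<longleftrightarrow>
     (\<exists>\<sigma>. strategy E own i \<sigma> \<and>
        (\<forall>p. inf_path (restr E own i \<sigma>) s p \<longrightarrow>
             (if i = 0 then parity_win0 col p else \<not> parity_win0 col p)))"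

section \<open>Escape arena (None plays the role of bottom)\<close>

definition esc_edges :: "'v set \<Rightarrow> ('v \<times> 'v) set \<Rightarrow> ('v \<Rightarrow> nat) \<Rightarrow> ('v option \<times> 'v option) set" where
  "esc_edges V E own = (\<lambda>(u, w). (Some u, Some w)) ` E \<union> {(Some v, None) | v. v \<in> V \<and> own v = 0}"

definition esc_own :: "('v \<Rightarrow> nat) \<Rightarrow> 'v option \<Rightarrow> nat" where
  "esc_own own x = (case x of None \<Rightarrow> 0 | Some v \<Rightarrow> own v)"

text \<open>Elements of Z^d are represented as integer lists of length d.\<close>
datatype profile = NegInf | Fin "int list" | PosInf

definition prof_less :: "nat \<Rightarrow> profile \<Rightarrow> profile \<Rightarrow> bool" where
  "prof_less d p q \<longleftrightarrow>
     (case (p, q) of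
        (NegInf, NegInf) \<Rightarrow> False
      | (NegInf, _) \<Rightarrow> True
      | (PosInf, _) \<Rightarrow> False
      | (Fin _, NegInf) \<Rightarrow> False
      | (Fin _, PosInf) \<Rightarrow> True
      | (Fin a, Fin b) \<Rightarrow>
          (\<exists>k < d. a ! k \<noteq> b ! k \<and> (\<forall>j. k < j \<and> j < d \<longrightarrow> a ! j = b ! j) \<and>
                   ((even k \<and> a ! k < b ! k) \<or> (odd k \<and> a ! k > b ! k))))"

definition fin_value :: "('v \<Rightarrow> nat) \<Rightarrow> nat \<Rightarrow> 'v option list \<Rightarrow> profile" where
  "fin_value col d xs =
     Fin (map (\<lambda>k. int (length (filter (\<lambda>x. x \<noteq> None \<and> col (the x) = k) xs))) [0..<d])"

text \<open>Value of an infinite play (infinite plays never visit bottom).\<close>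
definition inf_value :: "('v \<Rightarrow> nat) \<Rightarrow> (nat \<Rightarrow> 'v option) \<Rightarrow> profile" where
  "inf_value col p = (if parity_win0 col (the \<circ> p) then PosInf else NegInf)"

definition prof_max :: "nat \<Rightarrow> profile set \<Rightarrow> profile" where
  "prof_max d S = (if S = {} then NegInf else
     (THE p. p \<in> S \<and> (\<forall>q \<in> S. q \<noteq> p \<longrightarrow> prof_less d q p)))"

definition acyc_bound :: "'v set \<Rightarrow> ('v \<times> 'v) set \<Rightarrow> ('v \<Rightarrow> nat) \<Rightarrow> ('v \<Rightarrow> nat) \<Rightarrow> nat \<Rightarrow> profile" where
  "acyc_bound V E own col d = prof_max d
     {fin_value col d xs | xs. fin_path (esc_edges V E own) xs \<and> distinct xs \<and> last xs = None}"

definition wins_escape :: "'v set \<Rightarrow> ('v \<times> 'v) set \<Rightarrow> ('v \<Rightarrow> nat) \<Rightarrow> ('v \<Rightarrow> nat) \<Rightarrow> nat \<Rightarrow> nat \<Rightarrow> 'v \<Rightarrow> bool" where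
  "wins_escape V E own col d i s \<longleftrightarrow>
     (let Eb = esc_edges V E own; ob = esc_own own; B = acyc_bound V E own col d;
          win = (\<lambda>val. if i = 0 then prof_less d B val else \<not> prof_less d B val) in
     (\<exists>\<sigma>. strategy Eb ob i \<sigma> \<and>
        (\<forall>p. inf_path (restr Eb ob i \<sigma>) (Some s) p \<longrightarrow> win (inf_value col p)) \<and>
        (\<forall>xs. fin_max_path (restr Eb ob i \<sigma>) (Some s) xs \<longrightarrow> win (fin_value col d xs))))"

end

theory Submission
  imports Defs "HOL-Library.Infinite_Set"
begin

lemma fin_path_Cons:
  "fin_path R (x # xs) \<longleftrightarrow> (xs = [] \<or> ((x, hd xs) \<in> R \<and> fin_path R xs))"
proof (cases xs)
  case Nil thus ?thesis by (simp add: fin_path_def)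
next
  case (Cons y ys)
  show ?thesis
  proof
    assume h: "fin_path R (x # xs)"
    have "(x, hd xs) \<in> R" using h Cons unfolding fin_path_def by force
    moreover have "fin_path R xs"
      unfolding fin_path_def
    proof (intro conjI allI impI)
      show "xs \<noteq> []" using Cons by simp
      fix j assume "Suc j < length xs"
      thus "(xs ! j, xs ! Suc j) \<in> R" using h unfolding fin_path_def
        by (metis Suc_less_eq length_Cons nth_Cons_Suc)
    qed
    ultimately show "xs = [] \<or> ((x, hd xs) \<in> R \<and> fin_path R xs)" by simp
  next
    assume h: "xs = [] \<or> ((x, hd xs) \<in> R \<and> fin_path R xs)"
    hence h1: "(x, hd xs) \<in> R" and h2: "fin_path R xs" using Cons by auto
    show "fin_path R (x # xs)" unfolding fin_path_def
    proof (intro conjI allI impI)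
      fix j assume j: "Suc j < length (x # xs)"
      show "((x # xs) ! j, (x # xs) ! Suc j) \<in> R"
      proof (cases j)
        case 0 thus ?thesis using h1 Cons by simp
      next
        case (Suc j') thus ?thesis using h2 j unfolding fin_path_def by simp
      qed
    qed simp
  qed
qed

lemma fin_path_append:
  assumes "xs \<noteq> []" "ys \<noteq> []"
  shows "fin_path R (xs @ ys) \<longleftrightarrow> fin_path R xs \<and> fin_path R ys \<and> (last xs, hd ys) \<in> R"
  using assms(1)
proof (induction xs)
  case Nil thus ?case by simp
next
  case (Cons x xs)
  show ?case
  proof (cases "xs = []")
    case True thus ?thesis using assms(2) by (auto simp: fin_path_Cons)
  next
    case False
    thus ?thesis using Cons.IH assms(2) by (auto simp: fin_path_Cons)
  qed
qed

lemma fin_path_mono: "R \<subseteq> R' \<Longrightarrow> fin_path R xs \<Longrightarrow> fin_path R' xs"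
  unfolding fin_path_def by blast

lemma rtrancl_distinct_path:
  "(a, b) \<in> R\<^sup>* \<Longrightarrow> \<exists>xs. fin_path R xs \<and> hd xs = a \<and> last xs = b \<and> distinct xs"
proof (induction rule: converse_rtrancl_induct)
  case base show ?case by (rule exI[of _ "[b]"]) (simp add: fin_path_def)
next
  case (step a a')
  then obtain xs where xs: "fin_path R xs" "hd xs = a'" "last xs = b" "distinct xs" by blast
  have ne: "xs \<noteq> []" using xs(1) by (simp add: fin_path_def)
  show ?case
  proof (cases "a \<in> set xs")
    case True
    then obtain ys zs where sp: "xs = ys @ a # zs" by (meson split_list)
    have "fin_path R (a # zs)"
    proof (cases "ys = []")
      case True thus ?thesis using sp xs(1) by simp
    next
      case False thus ?thesis using sp xs(1) fin_path_append[of ys "a # zs" R] by simp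
    qed
    moreover have "last (a # zs) = b" using sp xs(3) by simp
    moreover have "distinct (a # zs)" using sp xs(4) by simp
    ultimately show ?thesis by (intro exI[of _ "a # zs"]) simp
  next
    case False
    have "fin_path R (a # xs)" using ne xs step(1) by (simp add: fin_path_Cons)
    thus ?thesis using False xs ne by (intro exI[of _ "a # xs"]) simp
  qed
qed

section \<open>Order on profiles\<close>

lemma prof_less_irrefl: "\<not> prof_less d p p"
  by (cases p) (auto simp: prof_less_def)

lemma prof_less_NegInf: "\<not> prof_less d p NegInf"
  by (cases p) (auto simp: prof_less_def)

lemma prof_less_Fin_PosInf: "prof_less d (Fin a) PosInf"
  by (simp add: prof_less_def)

lemma lex_trans:
  assumes "\<exists>k<d. a!k \<noteq> b!k \<and> (\<forall>j. k<j \<and> j<d \<longrightarrow> a!j = b!j) \<and> ((even k \<and> a!k < b!k) \<or> (odd k \<and> a!k > b!k))"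
    and "\<exists>k<d. b!k \<noteq> c!k \<and> (\<forall>j. k<j \<and> j<d \<longrightarrow> b!j = c!j) \<and> ((even k \<and> b!k < c!k) \<or> (odd k \<and> b!k > c!k))"
  shows "\<exists>k<d. a!k \<noteq> (c::int list)!k \<and> (\<forall>j. k<j \<and> j<d \<longrightarrow> a!j = c!j) \<and> ((even k \<and> a!k < c!k) \<or> (odd k \<and> a!k > c!k))"
proof -
  obtain k1 where k1: "k1<d" "a!k1 \<noteq> b!k1" "\<forall>j. k1<j \<and> j<d \<longrightarrow> a!j = b!j"
     "(even k1 \<and> a!k1 < b!k1) \<or> (odd k1 \<and> a!k1 > b!k1)" using assms(1) by blast
  obtain k2 where k2: "k2<d" "b!k2 \<noteq> c!k2" "\<forall>j. k2<j \<and> j<d \<longrightarrow> b!j = c!j"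
     "(even k2 \<and> b!k2 < c!k2) \<or> (odd k2 \<and> b!k2 > c!k2)" using assms(2) by blast
  consider "k1 < k2" | "k1 = k2" | "k2 < k1" by linarith
  thus ?thesis
  proof cases
    case 1
    thus ?thesis using k1 k2 by (intro exI[of _ k2]) auto
  next
    case 2
    thus ?thesis using k1 k2 by (intro exI[of _ k2]) auto
  next
    case 3
    thus ?thesis using k1 k2 by (intro exI[of _ k1]) auto
  qed
qed

lemma prof_less_trans: "prof_less d p q \<Longrightarrow> prof_less d q r \<Longrightarrow> prof_less d p r"
proof (cases p; cases q; cases r)
  fix a b c assume "prof_less d p q" "prof_less d q r" "p = Fin a" "q = Fin b" "r = Fin c"
  thus "prof_less d p r" using lex_trans[of d a b c] by (simp add: prof_less_def)
qed (auto simp: prof_less_def)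

lemma prof_less_total:
  assumes "length a = d" "length b = d" "a \<noteq> b"
  shows "prof_less d (Fin a) (Fin b) \<or> prof_less d (Fin b) (Fin a)"
proof -
  let ?K = "{k. k < d \<and> a!k \<noteq> b!k}"
  have ne: "?K \<noteq> {}" using assms nth_equalityI by force
  have fin: "finite ?K" by simp
  define k where "k = Max ?K"
  have kK: "k \<in> ?K" using Max_in[OF fin ne] k_def by simp
  have above: "\<forall>j. k<j \<and> j<d \<longrightarrow> a!j = b!j"
  proof (intro allI impI)
    fix j assume j: "k<j \<and> j<d"
    show "a!j = b!j"
    proof (rule ccontr)
      assume "a!j \<noteq> b!j"
      hence "j \<in> ?K" using j by simp
      hence "j \<le> k" using Max_ge[OF fin] k_def by simp
      thus False using j by simp
    qed
  qed
  have kd: "k < d" and nk: "a!k \<noteq> b!k" using kK by auto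
  have above': "\<forall>j. k<j \<and> j<d \<longrightarrow> b!j = a!j" using above by simp
  have lt: "a!k < b!k \<or> b!k < a!k" using nk by linarith
  have "(\<exists>k<d. a!k \<noteq> b!k \<and> (\<forall>j. k<j \<and> j<d \<longrightarrow> a!j = b!j) \<and> ((even k \<and> a!k < b!k) \<or> (odd k \<and> a!k > b!k)))
      \<or> (\<exists>k<d. b!k \<noteq> a!k \<and> (\<forall>j. k<j \<and> j<d \<longrightarrow> b!j = a!j) \<and> ((even k \<and> b!k < a!k) \<or> (odd k \<and> b!k > a!k)))"
  proof (cases "even k")
    case True
    from lt show ?thesis
    proof
      assume "a!k < b!k" thus ?thesis using True kd nk above by blast
    next
      assume "b!k < a!k" thus ?thesis using True kd nk above' by (metis order_less_irrefl)
    qed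
  next
    case False
    from lt show ?thesis
    proof
      assume "a!k < b!k" thus ?thesis using False kd nk above' by (metis order_less_irrefl)
    next
      assume "b!k < a!k" thus ?thesis using False kd nk above by blast
    qed
  qed
  thus ?thesis unfolding prof_less_def by simp
qed

lemma has_max:
  assumes "finite S" "S \<noteq> {}" "\<forall>p\<in>S. \<exists>a. p = Fin a \<and> length a = d"
  shows "\<exists>m\<in>S. \<forall>q\<in>S. q \<noteq> m \<longrightarrow> prof_less d q m"
  using assms
proof (induction S rule: finite_ne_induct)
  case (singleton x) thus ?case by simp
next
  case (insert x F)
  then obtain m where m: "m \<in> F" "\<forall>q\<in>F. q \<noteq> m \<longrightarrow> prof_less d q m" by auto
  show ?case
  proof (cases "prof_less d m x")
    case True
    show ?thesis
    proof (intro bexI[of _ x] ballI impI)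
      fix q assume "q \<in> insert x F" "q \<noteq> x"
      hence "q \<in> F" by simp
      show "prof_less d q x"
      proof (cases "q = m")
        case True thus ?thesis using \<open>prof_less d m x\<close> by simp
      next
        case False
        hence "prof_less d q m" using m \<open>q \<in> F\<close> by blast
        thus ?thesis using prof_less_trans \<open>prof_less d m x\<close> by blast
      qed
    qed simp
  next
    case False
    have "x \<noteq> m" using m insert.hyps by auto
    moreover obtain a b where "x = Fin a" "length a = d" "m = Fin b" "length b = d"
      using insert.prems m(1) by blast
    ultimately have "prof_less d x m" using False prof_less_total by blast
    thus ?thesis using m by (intro bexI[of _ m]) auto
  qed
qed

lemma prof_max_prop:
  assumes "finite S" "S \<noteq> {}" "\<forall>p\<in>S. \<exists>a. p = Fin a \<and> length a = d"
  shows "prof_max d S \<in> S \<and> (\<forall>q\<in>S. \<not> prof_less d (prof_max d S) q)"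
proof -
  obtain m where m: "m \<in> S" "\<forall>q\<in>S. q \<noteq> m \<longrightarrow> prof_less d q m" using has_max[OF assms] by blast
  have "(THE p. p \<in> S \<and> (\<forall>q \<in> S. q \<noteq> p \<longrightarrow> prof_less d q p)) = m"
  proof (rule the_equality)
    show "m \<in> S \<and> (\<forall>q\<in>S. q \<noteq> m \<longrightarrow> prof_less d q m)" using m by simp
    fix p assume p: "p \<in> S \<and> (\<forall>q\<in>S. q \<noteq> p \<longrightarrow> prof_less d q p)"
    show "p = m"
    proof (rule ccontr)
      assume "p \<noteq> m"
      hence "prof_less d p m" "prof_less d m p" using p m by auto
      thus False using prof_less_trans prof_less_irrefl by blast
    qed
  qed
  hence "prof_max d S = m" using assms(2) by (simp add: prof_max_def)
  moreover have "\<forall>q\<in>S. \<not> prof_less d m q"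
  proof
    fix q assume q: "q \<in> S"
    show "\<not> prof_less d m q"
    proof
      assume mq: "prof_less d m q"
      hence "q \<noteq> m" using prof_less_irrefl by metis
      hence "prof_less d q m" using m q by blast
      thus False using mq prof_less_trans prof_less_irrefl by metis
    qed
  qed
  ultimately show ?thesis using m by simp
qed


section \<open>Lassos\<close>

definition lasso :: "'a list \<Rightarrow> 'a list \<Rightarrow> nat \<Rightarrow> 'a" where
  "lasso pre cyc n = (if n < length pre then pre ! n else cyc ! ((n - length pre) mod length cyc))"

lemma lasso_path:
  assumes fp: "fin_path R (pre @ cyc @ [hd cyc])" and ne: "cyc \<noteq> []"
  shows "inf_path R (hd (pre @ cyc)) (lasso pre cyc)"
proof -
  let ?Z = "pre @ cyc @ [hd cyc]"
  let ?L = "length pre"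
  let ?C = "length cyc"
  let ?q = "lasso pre cyc"
  define g where "g n = (if n < ?L then n else ?L + (n - ?L) mod ?C)" for n
  have C: "?C > 0" using ne by simp
  have gl: "g n < ?L + ?C" for n unfolding g_def using C by auto
  have qg: "?q n = ?Z ! g n" for n unfolding g_def lasso_def using C by (auto simp: nth_append)
  have nxt: "?Z ! Suc (g n) = ?q (Suc n)" for n
  proof (cases "Suc n < ?L")
    case True thus ?thesis unfolding g_def lasso_def by (simp add: nth_append)
  next
    case False
    show ?thesis
    proof (cases "n < ?L")
      case True
      hence "Suc n = ?L" using False by simp
      thus ?thesis unfolding g_def lasso_def using True C by (simp add: nth_append)
    next
      case nL: False
      define r where "r = (n - ?L) mod ?C"
      have r: "r < ?C" using C r_def by simp
      have gn: "g n = ?L + r" unfolding g_def r_def using nL by simp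
      have "Suc n - ?L = Suc (n - ?L)" using nL by simp
      hence sm: "(Suc n - ?L) mod ?C = (if Suc r = ?C then 0 else Suc r)"
        using r_def mod_Suc by simp
      show ?thesis
      proof (cases "Suc r = ?C")
        case True
        have "?Z ! Suc (g n) = hd cyc" using gn True by (simp add: nth_append)
        moreover have "?q (Suc n) = cyc ! 0" using nL sm True unfolding lasso_def by simp
        ultimately show ?thesis using ne by (simp add: hd_conv_nth)
      next
        case False
        hence "Suc r < ?C" using r by simp
        thus ?thesis using nL sm gn False unfolding lasso_def by (simp add: nth_append)
      qed
    qed
  qed
  show ?thesis unfolding inf_path_def
  proof (intro conjI allI)
    show "?q 0 = hd (pre @ cyc)" using ne unfolding lasso_def by (cases pre) (auto simp: hd_conv_nth)
    fix n
    have "Suc (g n) < length ?Z" using gl[of n] by simp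
    hence "(?Z ! g n, ?Z ! Suc (g n)) \<in> R" using fp unfolding fin_path_def by blast
    thus "(?q n, ?q (Suc n)) \<in> R" using qg nxt by simp
  qed
qed

lemma lasso_inf:
  assumes ne: "cyc \<noteq> []"
  shows "{k. \<exists>\<^sub>\<infinity>n. f (lasso pre cyc n) = k} = f ` set cyc"
proof (intro equalityI subsetI)
  fix k assume "k \<in> {k. \<exists>\<^sub>\<infinity>n. f (lasso pre cyc n) = k}"
  hence "\<exists>\<^sub>\<infinity>n. f (lasso pre cyc n) = k" by simp
  then obtain n where n: "n > length pre" "f (lasso pre cyc n) = k" unfolding INFM_nat by blast
  hence "k = f (cyc ! ((n - length pre) mod length cyc))" unfolding lasso_def by simp
  moreover have "cyc ! ((n - length pre) mod length cyc) \<in> set cyc" using ne by simp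
  ultimately show "k \<in> f ` set cyc" by blast
next
  fix k assume "k \<in> f ` set cyc"
  then obtain i where i: "i < length cyc" "k = f (cyc ! i)" by (auto simp: in_set_conv_nth)
  have "\<exists>\<^sub>\<infinity>n. f (lasso pre cyc n) = k" unfolding INFM_nat
  proof
    fix m
    let ?n = "length pre + i + length cyc * Suc m"
    have "length cyc \<ge> 1" using ne by (cases cyc) auto
    hence "length cyc * Suc m \<ge> 1 * Suc m" by (rule mult_le_mono1)
    hence "length cyc * Suc m \<ge> Suc m" by simp
    hence nm: "?n > m" by linarith
    have "(i + length cyc * Suc m) mod length cyc = i mod length cyc" by (rule mod_mult_self2)
    hence "(?n - length pre) mod length cyc = i" using i by simp
    with nm show "\<exists>n>m. f (lasso pre cyc n) = k" using i unfolding lasso_def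
      by (intro exI[of _ ?n]) auto
  qed
  thus "k \<in> {k. \<exists>\<^sub>\<infinity>n. f (lasso pre cyc n) = k}" by simp
qed

section \<open>Escape arena\<close>

definition lift :: "('v \<times> 'v) set \<Rightarrow> ('v option \<times> 'v option) set" where
  "lift \<sigma> = (\<lambda>(u, w). (Some u, Some w)) ` \<sigma>"

definition unlift :: "('v \<times> 'v) set \<Rightarrow> ('v \<Rightarrow> nat) \<Rightarrow> nat \<Rightarrow> ('v option \<times> 'v option) set \<Rightarrow> ('v \<times> 'v) set" where
  "unlift E own i \<tau> = {(u, w) \<in> E. own u = i \<and> ((Some u, Some w) \<in> \<tau> \<or> (Some u, None) \<in> \<tau>)}"

lemma lift_mem[simp]: "(x, y) \<in> lift \<sigma> \<longleftrightarrow> (\<exists>u w. x = Some u \<and> y = Some w \<and> (u, w) \<in> \<sigma>)"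
  unfolding lift_def by auto

locale arena =
  fixes V :: "'v set" and E :: "('v \<times> 'v) set" and own col :: "'v \<Rightarrow> nat" and d :: nat
  assumes pa: "parity_arena V E own col d"
begin

abbreviation "Eb \<equiv> esc_edges V E own"
abbreviation "ob \<equiv> esc_own own"
abbreviation "Bd \<equiv> acyc_bound V E own col d"

lemma EV: "E \<subseteq> V \<times> V" and succ: "v \<in> V \<Longrightarrow> \<exists>w. (v, w) \<in> E"
  and colV: "v \<in> V \<Longrightarrow> col v < d" and finV: "finite V"
  using pa unfolding parity_arena_def by auto

lemma esc_SS[simp]: "(Some u, Some w) \<in> Eb \<longleftrightarrow> (u, w) \<in> E"
  unfolding esc_edges_def by auto
lemma esc_None_src[simp]: "(None, x) \<notin> Eb"
  unfolding esc_edges_def by auto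
lemma esc_SN[simp]: "(Some u, None) \<in> Eb \<longleftrightarrow> u \<in> V \<and> own u = 0"
  unfolding esc_edges_def by auto
lemma esc_src: "(x, y) \<in> Eb \<Longrightarrow> \<exists>u\<in>V. x = Some u"
  unfolding esc_edges_def using EV by auto
lemma esc_tgt: "(x, y) \<in> Eb \<Longrightarrow> y = None \<or> (\<exists>w\<in>V. y = Some w)"
  unfolding esc_edges_def using EV by auto
lemma esc_into_None: "(x, None) \<in> Eb \<Longrightarrow> \<exists>u. x = Some u \<and> own u = 0"
  unfolding esc_edges_def by auto
lemma ob_Some[simp]: "ob (Some u) = own u" by (simp add: esc_own_def)

lemma fin_value_len: "\<exists>a. fin_value col d xs = Fin a \<and> length a = d"
  by (simp add: fin_value_def)

definition "Sset = {fin_value col d xs | xs. fin_path Eb xs \<and> distinct xs \<and> last xs = None}"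

lemma Sset_fin: "finite Sset"
proof -
  let ?P = "{xs. fin_path Eb xs \<and> distinct xs \<and> last xs = None}"
  have "?P \<subseteq> {xs. set xs \<subseteq> insert None (Some ` V) \<and> distinct xs}"
  proof
    fix xs assume "xs \<in> ?P"
    hence h: "fin_path Eb xs" "distinct xs" "last xs = None" by auto
    have "set xs \<subseteq> insert None (Some ` V)"
    proof
      fix x assume "x \<in> set xs"
      then obtain j where j: "j < length xs" "xs ! j = x" by (auto simp: in_set_conv_nth)
      show "x \<in> insert None (Some ` V)"
      proof (cases "Suc j < length xs")
        case True
        hence "(xs ! j, xs ! Suc j) \<in> Eb" using h(1) by (simp add: fin_path_def)
        thus ?thesis using esc_src j by blast
      next
        case False
        hence "j = length xs - 1" using j by simp
        hence "x = last xs" using j h(1) by (simp add: last_conv_nth fin_path_def)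
        thus ?thesis using h(3) by simp
      qed
    qed
    thus "xs \<in> {xs. set xs \<subseteq> insert None (Some ` V) \<and> distinct xs}" using h by simp
  qed
  moreover have "finite {xs. set xs \<subseteq> insert None (Some ` V) \<and> distinct xs}"
    using finV by (intro finite_subset_distinct) simp
  ultimately have "finite ?P" by (rule finite_subset)
  moreover have "Sset = fin_value col d ` ?P" unfolding Sset_def by auto
  ultimately show ?thesis by simp
qed

lemma Bd_prop: "Bd \<in> Sset \<and> (\<forall>q\<in>Sset. \<not> prof_less d Bd q)"
proof -
  have "fin_value col d [None] \<in> Sset" unfolding Sset_def by (auto simp: fin_path_def)
  hence ne: "Sset \<noteq> {}" by blast
  have "\<forall>p\<in>Sset. \<exists>a. p = Fin a \<and> length a = d" unfolding Sset_def using fin_value_len by auto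
  moreover have "Bd = prof_max d Sset" unfolding acyc_bound_def Sset_def by simp
  ultimately show ?thesis using prof_max_prop[OF Sset_fin ne] by simp
qed

lemma Bd_PosInf: "prof_less d Bd PosInf"
proof -
  obtain xs where "Bd = fin_value col d xs" using Bd_prop unfolding Sset_def by blast
  thus ?thesis using fin_value_len[of xs] prof_less_Fin_PosInf by auto
qed

lemma Bd_acyc: "fin_path Eb xs \<Longrightarrow> distinct xs \<Longrightarrow> last xs = None \<Longrightarrow> \<not> prof_less d Bd (fin_value col d xs)"
  using Bd_prop unfolding Sset_def by blast

lemma lift_sub:
  assumes "\<sigma> \<subseteq> E" shows "lift \<sigma> \<subseteq> Eb"
proof
  fix x assume "x \<in> lift \<sigma>"
  then obtain u w where uw: "x = (Some u, Some w)" "(u, w) \<in> \<sigma>" unfolding lift_def by auto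
  hence "(u, w) \<in> E" using assms by blast
  thus "x \<in> Eb" using uw by simp
qed

lemma lift_strategy:
  assumes "strategy E own i \<sigma>"
  shows "strategy Eb ob i (lift \<sigma>)"
  unfolding strategy_def
proof (intro conjI)
  show "lift \<sigma> \<subseteq> Eb" using assms lift_sub unfolding strategy_def by blast
  show "\<forall>(u, w)\<in>lift \<sigma>. ob u = i" using assms unfolding strategy_def lift_def by auto
  show "\<forall>u. ob u = i \<and> (\<exists>w. (u, w) \<in> Eb) \<longrightarrow> (\<exists>w. (u, w) \<in> lift \<sigma>)"
  proof (intro allI impI)
    fix x assume h: "ob x = i \<and> (\<exists>w. (x, w) \<in> Eb)"
    then obtain y where "(x, y) \<in> Eb" by blast
    then obtain u where u: "u \<in> V" "x = Some u" using esc_src by blast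
    then obtain w where "(u, w) \<in> E" using succ by blast
    moreover have "own u = i" using h u by simp
    ultimately obtain w' where "(u, w') \<in> \<sigma>" using assms unfolding strategy_def by blast
    thus "\<exists>w. (x, w) \<in> lift \<sigma>" using u by auto
  qed
qed

lemma restr_lift_SS: "(Some u, Some w) \<in> restr Eb ob i (lift \<sigma>) \<longleftrightarrow> (u, w) \<in> restr E own i \<sigma>"
  unfolding restr_def by auto

lemma lift_path:
  assumes "inf_path (restr Eb ob i (lift \<sigma>)) (Some s) p" "\<sigma> \<subseteq> E"
  shows "inf_path (restr E own i \<sigma>) s (the \<circ> p)"
proof -
  have sub: "restr Eb ob i (lift \<sigma>) \<subseteq> Eb" using lift_sub assms(2) unfolding restr_def by auto
  have nn: "p n \<noteq> None" for n
  proof -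
    have "(p n, p (Suc n)) \<in> Eb" using assms(1) sub unfolding inf_path_def by blast
    thus "p n \<noteq> None" by (cases "p n") auto
  qed
  show ?thesis unfolding inf_path_def
  proof (intro conjI allI)
    show "(the \<circ> p) 0 = s" using assms(1) unfolding inf_path_def by simp
    fix n
    obtain u where u: "p n = Some u" using nn[of n] by (cases "p n") auto
    obtain w where w: "p (Suc n) = Some w" using nn[of "Suc n"] by (cases "p (Suc n)") auto
    have "(p n, p (Suc n)) \<in> restr Eb ob i (lift \<sigma>)" using assms(1) unfolding inf_path_def by blast
    thus "((the \<circ> p) n, (the \<circ> p) (Suc n)) \<in> restr E own i \<sigma>" using u w restr_lift_SS by simp
  qed
qed

lemma path_elems:
  assumes "fin_path R xs" "R \<subseteq> Eb" "hd xs = Some s" "s \<in> V" "j < length xs"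
  shows "xs ! j = None \<or> (\<exists>v\<in>V. xs ! j = Some v)"
proof (cases j)
  case 0
  have "xs \<noteq> []" using assms(1) by (simp add: fin_path_def)
  thus ?thesis using 0 assms(3,4) by (simp add: hd_conv_nth)
next
  case (Suc j')
  hence "(xs ! j', xs ! j) \<in> Eb" using assms(1,2,5) unfolding fin_path_def by blast
  thus ?thesis using esc_tgt by blast
qed

lemma path_butlast:
  assumes "fin_path R xs" "R \<subseteq> Eb" "x \<in> set (butlast xs)"
  shows "\<exists>v\<in>V. x = Some v"
proof -
  obtain j where j: "j < length (butlast xs)" "butlast xs ! j = x" using assms(3) by (auto simp: in_set_conv_nth)
  hence "Suc j < length xs" "xs ! j = x" by (auto simp: nth_butlast)
  hence "(x, xs ! Suc j) \<in> Eb" using assms(1,2) unfolding fin_path_def by blast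
  thus ?thesis using esc_src by blast
qed

lemma lift_last:
  assumes "strategy E own i \<sigma>" "s \<in> V" "fin_max_path (restr Eb ob i (lift \<sigma>)) (Some s) xs"
  shows "last xs = None"
proof -
  let ?R = "restr Eb ob i (lift \<sigma>)"
  have sub: "?R \<subseteq> Eb" using lift_sub assms(1) unfolding restr_def strategy_def by auto
  have fp: "fin_path ?R xs" "hd xs = Some s" "\<not> (\<exists>w. (last xs, w) \<in> ?R)"
    using assms(3) unfolding fin_max_path_def by auto
  have ne: "xs \<noteq> []" using fp(1) by (simp add: fin_path_def)
  have "last xs = xs ! (length xs - 1)" by (simp add: last_conv_nth ne)
  hence "last xs = None \<or> (\<exists>v\<in>V. last xs = Some v)"
    using path_elems[OF fp(1) sub fp(2) assms(2), of "length xs - 1"] ne by simp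
  moreover have "\<not> (\<exists>v\<in>V. last xs = Some v)"
  proof
    assume "\<exists>v\<in>V. last xs = Some v"
    then obtain v where v: "v \<in> V" "last xs = Some v" by blast
    obtain w where w: "(v, w) \<in> E" using succ v by blast
    have "\<exists>w. (last xs, w) \<in> ?R"
    proof (cases "own v = i")
      case True
      then obtain w' where "(v, w') \<in> \<sigma>" using assms(1) w unfolding strategy_def by blast
      thus ?thesis using v unfolding restr_def by auto
    next
      case False
      have "(Some v, Some w) \<in> ?R" unfolding restr_def using w False by simp
      thus ?thesis using v by auto
    qed
    thus False using fp(3) by blast
  qed
  ultimately show ?thesis by blast
qed

lemma lift0_nomax:
  assumes "strategy E own 0 \<sigma>" "s \<in> V"
  shows "\<not> fin_max_path (restr Eb ob 0 (lift \<sigma>)) (Some s) xs"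
proof
  assume h: "fin_max_path (restr Eb ob 0 (lift \<sigma>)) (Some s) xs"
  let ?R = "restr Eb ob 0 (lift \<sigma>)"
  have l: "last xs = None" using lift_last[OF assms h] .
  have fp: "fin_path ?R xs" "hd xs = Some s" using h unfolding fin_max_path_def by auto
  have ne: "xs \<noteq> []" using fp(1) by (simp add: fin_path_def)
  have "length xs \<noteq> 1"
  proof
    assume "length xs = 1"
    then obtain x where "xs = [x]" by (metis One_nat_def length_0_conv length_Suc_conv)
    thus False using l fp(2) by simp
  qed
  hence len: "Suc (length xs - 2) < length xs" "Suc (length xs - 2) = length xs - 1" using ne
    by (cases xs; auto)+
  have "(xs ! (length xs - 2), xs ! Suc (length xs - 2)) \<in> ?R" using fp(1) len(1) unfolding fin_path_def by blast
  moreover have "xs ! Suc (length xs - 2) = None" using l len(2) ne by (simp add: last_conv_nth)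
  ultimately have e: "(xs ! (length xs - 2), None) \<in> ?R" by simp
  show False
    using e unfolding restr_def by (auto dest: esc_into_None)
qed

lemma unlift_strategy:
  assumes "strategy Eb ob i \<tau>"
  shows "strategy E own i (unlift E own i \<tau>)"
  unfolding strategy_def
proof (intro conjI)
  show "unlift E own i \<tau> \<subseteq> E" unfolding unlift_def by auto
  show "\<forall>(u, w)\<in>unlift E own i \<tau>. own u = i" unfolding unlift_def by auto
  show "\<forall>u. own u = i \<and> (\<exists>w. (u, w) \<in> E) \<longrightarrow> (\<exists>w. (u, w) \<in> unlift E own i \<tau>)"
  proof (intro allI impI)
    fix u assume h: "own u = i \<and> (\<exists>w. (u, w) \<in> E)"
    then obtain w where w: "(u, w) \<in> E" by blast
    have "(Some u, Some w) \<in> Eb" using w by simp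
    hence "\<exists>y. (Some u, y) \<in> Eb" by blast
    hence "ob (Some u) = i \<and> (\<exists>y. (Some u, y) \<in> Eb)" using h by simp
    then obtain y where y: "(Some u, y) \<in> \<tau>" using assms unfolding strategy_def by blast
    have tE: "\<tau> \<subseteq> Eb" using assms unfolding strategy_def by blast
    show "\<exists>w. (u, w) \<in> unlift E own i \<tau>"
    proof (cases y)
      case None thus ?thesis using y w h unfolding unlift_def by auto
    next
      case (Some w')
      hence "(u, w') \<in> E" using y tE by auto
      thus ?thesis using y Some h unfolding unlift_def by auto
    qed
  qed
qed

lemma unlift1_path:
  assumes "strategy Eb ob 1 \<tau>" "inf_path (restr E own 1 (unlift E own 1 \<tau>)) s q"
  shows "inf_path (restr Eb ob 1 \<tau>) (Some s) (Some \<circ> q)"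
  unfolding inf_path_def
proof (intro conjI allI)
  show "(Some \<circ> q) 0 = Some s" using assms(2) unfolding inf_path_def by simp
  fix n
  have e: "(q n, q (Suc n)) \<in> restr E own 1 (unlift E own 1 \<tau>)" using assms(2) unfolding inf_path_def by blast
  have tE: "\<tau> \<subseteq> Eb" using assms(1) unfolding strategy_def by blast
  have "(Some (q n), None) \<notin> \<tau>" if "own (q n) = 1"
  proof
    assume "(Some (q n), None) \<in> \<tau>"
    hence "(Some (q n), None) \<in> Eb" using tE by blast
    thus False using that by simp
  qed
  thus "((Some \<circ> q) n, (Some \<circ> q) (Suc n)) \<in> restr Eb ob 1 \<tau>"
    using e unfolding restr_def unlift_def by auto
qed

lemma unlift0_path:
  assumes "strategy Eb ob 0 \<tau>" "inf_path (restr E own 0 (unlift E own 0 \<tau>)) s q"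
    and noesc: "\<forall>x. (Some s, x) \<in> (restr Eb ob 0 \<tau>)\<^sup>* \<longrightarrow> (x, None) \<notin> \<tau>"
  shows "inf_path (restr Eb ob 0 \<tau>) (Some s) (Some \<circ> q)"
proof -
  let ?R = "restr Eb ob 0 \<tau>"
  have edge: "(Some (q n), Some (q (Suc n))) \<in> ?R" if r: "(Some s, Some (q n)) \<in> ?R\<^sup>*" for n
  proof -
    have e: "(q n, q (Suc n)) \<in> restr E own 0 (unlift E own 0 \<tau>)" using assms(2) unfolding inf_path_def by blast
    have "(Some (q n), None) \<notin> \<tau>" using noesc r by blast
    thus ?thesis using e unfolding restr_def unlift_def by auto
  qed
  have reach: "(Some s, Some (q n)) \<in> ?R\<^sup>*" for n
  proof (induction n)
    case 0 thus ?case using assms(2) unfolding inf_path_def by simp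
  next
    case (Suc n) thus ?case using edge[OF Suc] by (rule rtrancl_into_rtrancl)
  qed
  show ?thesis unfolding inf_path_def using edge[OF reach] assms(2) unfolding inf_path_def by simp
qed


lemma hard:
  assumes str: "strategy E own 1 \<tau>"
    and win: "\<forall>p. inf_path (restr E own 1 \<tau>) s p \<longrightarrow> \<not> parity_win0 col p"
  shows "fin_path (restr Eb ob 1 (lift \<tau>)) xs \<Longrightarrow> hd xs = Some s \<Longrightarrow> last xs = None
    \<Longrightarrow> \<not> prof_less d Bd (fin_value col d xs)"
proof (induction "length xs" arbitrary: xs rule: less_induct)
  case less
  let ?R = "restr Eb ob 1 (lift \<tau>)"
  have tE: "\<tau> \<subseteq> E" using str unfolding strategy_def by blast
  have sub: "?R \<subseteq> Eb" using lift_sub[OF tE] unfolding restr_def by auto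
  have fpE: "fin_path Eb xs" using fin_path_mono[OF sub less.prems(1)] .
  show ?case
  proof (cases "distinct xs")
    case True thus ?thesis using Bd_acyc fpE less.prems(3) by blast
  next
    case False
    then obtain a y b c where xs: "xs = a @ [y] @ b @ [y] @ c" using not_distinct_decomp by blast
    have "y \<in> set (butlast xs)" using xs by (simp add: butlast_append)
    hence yV: "\<exists>v\<in>V. y = Some v" using path_butlast[OF less.prems(1) sub] by blast
    have cne: "c \<noteq> []"
    proof
      assume "c = []" then have "last xs = y" using xs by simp
      thus False using yV less.prems(3) by auto
    qed
    let ?xs' = "a @ [y] @ c"
    have fp1: "fin_path ?R (a @ [y])"
      using less.prems(1) xs fin_path_append[of "a @ [y]" "b @ [y] @ c" ?R] by simp
    have fp2: "fin_path ?R (y # c)"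
      using less.prems(1) xs fin_path_append[of "a @ [y] @ b" "[y] @ c" ?R] by simp
    have e: "(y, hd c) \<in> ?R" and fpc: "fin_path ?R c" using fp2 cne by (simp_all add: fin_path_Cons)
    have "fin_path ?R ((a @ [y]) @ c)" using fin_path_append[of "a @ [y]" c ?R] fp1 fpc e cne by simp
    hence fp': "fin_path ?R ?xs'" by simp
    have hd': "hd ?xs' = Some s" using less.prems(2) xs by (cases a) auto
    have last': "last ?xs' = None" using less.prems(3) xs cne by simp
    have len': "length ?xs' < length xs" using xs by simp
    have IH: "\<not> prof_less d Bd (fin_value col d ?xs')" using less.hyps[OF len' fp' hd' last'] .
    let ?cyc = "y # b"
    have fpZ: "fin_path ?R (a @ ?cyc @ [hd ?cyc])"
      using less.prems(1) xs fin_path_append[of "a @ [y] @ b @ [y]" c ?R] cne by simp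
    define q where "q = lasso a ?cyc"
    have "hd (a @ ?cyc) = Some s" using less.prems(2) xs by (cases a) auto
    hence ip: "inf_path ?R (Some s) q" using lasso_path[OF fpZ] q_def by simp
    have "inf_path (restr E own 1 \<tau>) s (the \<circ> q)" using lift_path[OF ip tE] .
    hence nw: "\<not> parity_win0 col (the \<circ> q)" using win by blast
    have cols: "{k. \<exists>\<^sub>\<infinity>n. col ((the \<circ> q) n) = k} = (\<lambda>x. col (the x)) ` set ?cyc"
      using lasso_inf[of ?cyc "\<lambda>x. col (the x)" a] q_def by simp
    define m where "m = Max ((\<lambda>x. col (the x)) ` set ?cyc)"
    have modd: "odd m" using nw cols unfolding parity_win0_def m_def by simp
    have "set ?cyc \<subseteq> set (butlast (a @ ?cyc @ [hd ?cyc]))" by (auto simp: butlast_append)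
    hence cycV: "\<forall>x\<in>set ?cyc. \<exists>v\<in>V. x = Some v" using path_butlast[OF fpZ sub] by blast
    have "m \<in> (\<lambda>x. col (the x)) ` set ?cyc" unfolding m_def by (intro Max_in) auto
    then obtain x0 where x0: "x0 \<in> set ?cyc" "col (the x0) = m" by blast
    then obtain v0 where v0: "v0 \<in> V" "x0 = Some v0" using cycV by blast
    have md: "m < d" using colV[OF v0(1)] x0 v0 by simp
    have above: "\<forall>x\<in>set ?cyc. col (the x) \<le> m" unfolding m_def by (intro ballI Max_ge) auto
    define cnt where "cnt k l = length (filter (\<lambda>x. x \<noteq> None \<and> col (the x) = k) l)" for k l
    have fv: "fin_value col d l = Fin (map (\<lambda>k. int (cnt k l)) [0..<d])" for l
      unfolding fin_value_def cnt_def by simp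
    have split: "cnt k xs = cnt k ?xs' + cnt k ?cyc" for k unfolding cnt_def xs by simp
    have "filter (\<lambda>x. x \<noteq> None \<and> col (the x) = m) ?cyc \<noteq> []"
      using x0 v0 by (auto simp: filter_empty_conv)
    hence cm: "cnt m ?cyc > 0" unfolding cnt_def by simp
    have cj: "cnt j ?cyc = 0" if "m < j" for j
    proof -
      have "filter (\<lambda>x. x \<noteq> None \<and> col (the x) = j) ?cyc = []"
        using above that by (auto simp: filter_empty_conv)
      thus ?thesis unfolding cnt_def by simp
    qed
    let ?A = "map (\<lambda>k. int (cnt k xs)) [0..<d]"
    let ?A' = "map (\<lambda>k. int (cnt k ?xs')) [0..<d]"
    have "\<exists>k<d. ?A ! k \<noteq> ?A' ! k \<and> (\<forall>j. k < j \<and> j < d \<longrightarrow> ?A ! j = ?A' ! j) \<and>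
        ((even k \<and> ?A ! k < ?A' ! k) \<or> (odd k \<and> ?A ! k > ?A' ! k))"
    proof (intro exI[of _ m] conjI)
      show "m < d" by (rule md)
      have "?A ! m > ?A' ! m" using md split[of m] cm by simp
      thus "?A ! m \<noteq> ?A' ! m" "(even m \<and> ?A ! m < ?A' ! m) \<or> (odd m \<and> ?A ! m > ?A' ! m)"
        using modd by auto
      show "\<forall>j. m < j \<and> j < d \<longrightarrow> ?A ! j = ?A' ! j"
        using split cj by simp
    qed
    hence lt: "prof_less d (fin_value col d xs) (fin_value col d ?xs')"
      unfolding fv prof_less_def by simp
    show ?thesis
    proof
      assume "prof_less d Bd (fin_value col d xs)"
      hence "prof_less d Bd (fin_value col d ?xs')" using lt prof_less_trans by blast
      thus False using IH by blast
    qed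
  qed
qed

lemma P0E0:
  assumes s: "s \<in> V" and w: "wins_parity E own col 0 s"
  shows "wins_escape V E own col d 0 s"
proof -
  obtain \<sigma> where \<sigma>: "strategy E own 0 \<sigma>" "\<forall>p. inf_path (restr E own 0 \<sigma>) s p \<longrightarrow> parity_win0 col p"
    using w unfolding wins_parity_def by auto
  have \<sigma>E: "\<sigma> \<subseteq> E" using \<sigma>(1) unfolding strategy_def by blast
  have h1: "strategy Eb ob 0 (lift \<sigma>)" using lift_strategy[OF \<sigma>(1)] .
  have h2: "\<forall>p. inf_path (restr Eb ob 0 (lift \<sigma>)) (Some s) p \<longrightarrow> prof_less d Bd (inf_value col p)"
  proof (intro allI impI)
    fix p assume "inf_path (restr Eb ob 0 (lift \<sigma>)) (Some s) p"
    hence "parity_win0 col (the \<circ> p)" using lift_path[OF _ \<sigma>E] \<sigma>(2) by blast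
    thus "prof_less d Bd (inf_value col p)" using Bd_PosInf by (simp add: inf_value_def)
  qed
  have h3: "\<forall>xs. fin_max_path (restr Eb ob 0 (lift \<sigma>)) (Some s) xs \<longrightarrow> prof_less d Bd (fin_value col d xs)"
    using lift0_nomax[OF \<sigma>(1) s] by blast
  show ?thesis unfolding wins_escape_def Let_def using h1 h2 h3 by (intro exI[of _ "lift \<sigma>"]) simp
qed

lemma P1E1:
  assumes s: "s \<in> V" and w: "wins_parity E own col 1 s"
  shows "wins_escape V E own col d 1 s"
proof -
  obtain \<sigma> where \<sigma>: "strategy E own 1 \<sigma>" "\<forall>p. inf_path (restr E own 1 \<sigma>) s p \<longrightarrow> \<not> parity_win0 col p"
    using w unfolding wins_parity_def by auto
  have \<sigma>E: "\<sigma> \<subseteq> E" using \<sigma>(1) unfolding strategy_def by blast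
  have h1: "strategy Eb ob 1 (lift \<sigma>)" using lift_strategy[OF \<sigma>(1)] .
  have h2: "\<forall>p. inf_path (restr Eb ob 1 (lift \<sigma>)) (Some s) p \<longrightarrow> \<not> prof_less d Bd (inf_value col p)"
  proof (intro allI impI)
    fix p assume "inf_path (restr Eb ob 1 (lift \<sigma>)) (Some s) p"
    hence "\<not> parity_win0 col (the \<circ> p)" using lift_path[OF _ \<sigma>E] \<sigma>(2) by blast
    thus "\<not> prof_less d Bd (inf_value col p)" using prof_less_NegInf by (simp add: inf_value_def)
  qed
  have h3: "\<forall>xs. fin_max_path (restr Eb ob 1 (lift \<sigma>)) (Some s) xs \<longrightarrow> \<not> prof_less d Bd (fin_value col d xs)"
  proof (intro allI impI)
    fix xs assume h: "fin_max_path (restr Eb ob 1 (lift \<sigma>)) (Some s) xs"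
    have "last xs = None" using lift_last[OF \<sigma>(1) s h] .
    thus "\<not> prof_less d Bd (fin_value col d xs)"
      using hard[OF \<sigma>(1,2)] h unfolding fin_max_path_def by blast
  qed
  show ?thesis unfolding wins_escape_def Let_def using h1 h2 h3 by (intro exI[of _ "lift \<sigma>"]) simp
qed

lemma E1P1:
  assumes s: "s \<in> V" and w: "wins_escape V E own col d 1 s"
  shows "wins_parity E own col 1 s"
proof -
  obtain \<tau> where \<tau>: "strategy Eb ob 1 \<tau>"
    "\<forall>p. inf_path (restr Eb ob 1 \<tau>) (Some s) p \<longrightarrow> \<not> prof_less d Bd (inf_value col p)"
    using w unfolding wins_escape_def Let_def by auto
  have h1: "strategy E own 1 (unlift E own 1 \<tau>)" using unlift_strategy[OF \<tau>(1)] .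
  have h2: "\<forall>q. inf_path (restr E own 1 (unlift E own 1 \<tau>)) s q \<longrightarrow> \<not> parity_win0 col q"
  proof (intro allI impI notI)
    fix q assume "inf_path (restr E own 1 (unlift E own 1 \<tau>)) s q" "parity_win0 col q"
    moreover have "the \<circ> (Some \<circ> q) = q" by (simp add: fun_eq_iff)
    ultimately have "inf_path (restr Eb ob 1 \<tau>) (Some s) (Some \<circ> q)" "inf_value col (Some \<circ> q) = PosInf"
      using unlift1_path[OF \<tau>(1)] by (auto simp: inf_value_def)
    thus False using \<tau>(2) Bd_PosInf by metis
  qed
  show ?thesis unfolding wins_parity_def using h1 h2 by (intro exI[of _ "unlift E own 1 \<tau>"]) simp
qed

lemma E0P0:
  assumes s: "s \<in> V" and w: "wins_escape V E own col d 0 s"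
  shows "wins_parity E own col 0 s"
proof -
  obtain \<tau> where \<tau>: "strategy Eb ob 0 \<tau>"
    "\<forall>p. inf_path (restr Eb ob 0 \<tau>) (Some s) p \<longrightarrow> prof_less d Bd (inf_value col p)"
    "\<forall>xs. fin_max_path (restr Eb ob 0 \<tau>) (Some s) xs \<longrightarrow> prof_less d Bd (fin_value col d xs)"
  proof -
    have "\<exists>\<tau>. strategy Eb ob 0 \<tau> \<and>
      (\<forall>p. inf_path (restr Eb ob 0 \<tau>) (Some s) p \<longrightarrow> prof_less d Bd (inf_value col p)) \<and>
      (\<forall>xs. fin_max_path (restr Eb ob 0 \<tau>) (Some s) xs \<longrightarrow> prof_less d Bd (fin_value col d xs))"
      using w unfolding wins_escape_def Let_def by simp
    thus ?thesis using that by blast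
  qed
  let ?R = "restr Eb ob 0 \<tau>"
  have tE: "\<tau> \<subseteq> Eb" using \<tau>(1) unfolding strategy_def by blast
  have sub: "?R \<subseteq> Eb" using tE unfolding restr_def by blast
  have noesc: "\<forall>x. (Some s, x) \<in> ?R\<^sup>* \<longrightarrow> (x, None) \<notin> \<tau>"
  proof (intro allI impI notI)
    fix x assume r: "(Some s, x) \<in> ?R\<^sup>*" and xn: "(x, None) \<in> \<tau>"
    have "(x, None) \<in> ?R" using xn unfolding restr_def by (rule UnI2)
    hence "(Some s, None) \<in> ?R\<^sup>*" by (rule rtrancl_into_rtrancl[OF r])
    from rtrancl_distinct_path[OF this] obtain xs where
      xs: "fin_path ?R xs" "hd xs = Some s" "last xs = None" "distinct xs" by blast
    have "\<not> (\<exists>w. (last xs, w) \<in> ?R)"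
    proof
      assume "\<exists>w. (last xs, w) \<in> ?R"
      then obtain w where "(None, w) \<in> ?R" using xs(3) by auto
      hence "(None, w) \<in> Eb" using sub by (rule subsetD[rotated])
      thus False by simp
    qed
    hence "fin_max_path ?R (Some s) xs" using xs unfolding fin_max_path_def by blast
    hence "prof_less d Bd (fin_value col d xs)" using \<tau>(3) by blast
    moreover have "fin_path Eb xs" using fin_path_mono[OF sub xs(1)] .
    ultimately show False using Bd_acyc xs(3,4) by blast
  qed
  have h1: "strategy E own 0 (unlift E own 0 \<tau>)" using unlift_strategy[OF \<tau>(1)] .
  have h2: "\<forall>q. inf_path (restr E own 0 (unlift E own 0 \<tau>)) s q \<longrightarrow> parity_win0 col q"
  proof (intro allI impI)
    fix q assume "inf_path (restr E own 0 (unlift E own 0 \<tau>)) s q"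
    hence "inf_path ?R (Some s) (Some \<circ> q)" using unlift0_path[OF \<tau>(1) _ noesc] by blast
    hence "prof_less d Bd (inf_value col (Some \<circ> q))" using \<tau>(2) by blast
    have "the \<circ> (Some \<circ> q) = q" by (simp add: fun_eq_iff)
    hence iv: "inf_value col (Some \<circ> q) = (if parity_win0 col q then PosInf else NegInf)"
      by (simp add: inf_value_def)
    show "parity_win0 col q"
    proof (rule ccontr)
      assume "\<not> parity_win0 col q"
      hence "inf_value col (Some \<circ> q) = NegInf" using iv by simp
      thus False using \<open>prof_less d Bd (inf_value col (Some \<circ> q))\<close> prof_less_NegInf by metis
    qed
  qed
  show ?thesis unfolding wins_parity_def using h1 h2 by (intro exI[of _ "unlift E own 0 \<tau>"]) simp
qed

end

theorem mainTheorem4: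
  fixes V :: "'v set" and E :: "('v \<times> 'v) set" and own col :: "'v \<Rightarrow> nat"
    and d i :: nat and s :: 'v
  assumes "parity_arena V E own col d"
    and "i \<in> {0, 1}"
    and "s \<in> V"
  shows "wins_parity E own col i s \<longleftrightarrow> wins_escape V E own col d i s"
proof -
  interpret arena V E own col d using assms(1) by unfold_locales
  show ?thesis
  proof (cases "i = 0")
    case True thus ?thesis using P0E0 E0P0 assms(3) by blast
  next
    case False
    hence "i = 1" using assms(2) by simp
    thus ?thesis using P1E1 E1P1 assms(3) by blast
  qed
qed

end
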